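(* Let $\mathbf{F}=(F_1,\ldots,F_d)$ be a vector of finite simple graphs, each with at most $n$ vertices, and let $e_i$ be the number of edges of $F_i$. Then the spine $\{ (p^{e_1}, p^{e_2}, \ldots, p^{e_d} ) \mid 0\leq p \leq 1 \}$ is contained in $P_{\mathbf{F};n}$ (with the convention $0^0=1$).
   Context: For graphs $F,G$, $t^L(F,G)$ is the number of subgraphs of $G$ (not necessarily induced) isomorphic to $F$, and $t(F,G)=t^L(F,G)/t^L(F,K_{|G|})$ if $|F|\le|G|$ and $t(F,G)=0$ otherwise, where $|H|$ is the number of vertices of $H$ and $K_N$ the complete graph on $N$ vertices. Write $t(\mathbf{F},G)=(t(F_1,G),\ldots,t(F_d,G))$. The polytope from subgraph statistics is $P_{\mathbf{F};n}=\mathrm{conv}\{t(\mathbf{F},G)\mid G \text{ a graph on } n \text{ vertices}\}\subseteq\mathbb{R}^d$. *)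

theory Defs
  imports "HOL-Analysis.Analysis"
begin

text \<open>A finite simple graph with vertex set {0..<k} is represented by the pair (k, E),
  where E is a set of 2-element subsets of {0..<k}.\<close>

type_synonym graph = "nat \<times> nat set set"

definition gverts :: "graph \<Rightarrow> nat" where "gverts G = fst G"
definition gedges :: "graph \<Rightarrow> nat set set" where "gedges G = snd G"

definition is_graph :: "graph \<Rightarrow> bool" where
  "is_graph G \<longleftrightarrow> (\<forall>e\<in>gedges G. card e = 2 \<and> e \<subseteq> {..<gverts G})"

definition complete_graph :: "nat \<Rightarrow> graph" where
  "complete_graph N = (N, {e. card e = 2 \<and> e \<subseteq> {..<N}})"

definition subgraphs :: "graph \<Rightarrow> (nat set \<times> nat set set) set" where
  "subgraphs G = {(V', E'). V' \<subseteq> {..<gverts G} \<and> E' \<subseteq> gedges G \<and> (\<forall>e\<in>E'. e \<subseteq> V')}"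

definition iso_to :: "graph \<Rightarrow> nat set \<times> nat set set \<Rightarrow> bool" where
  "iso_to F H \<longleftrightarrow> (\<exists>f. bij_betw f {..<gverts F} (fst H) \<and>
      (\<lambda>e. f ` e) ` gedges F = snd H)"

definition tL :: "graph \<Rightarrow> graph \<Rightarrow> nat" where
  "tL F G = card {H \<in> subgraphs G. iso_to F H}"

definition tdens :: "graph \<Rightarrow> graph \<Rightarrow> real" where
  "tdens F G = (if gverts F \<le> gverts G
      then real (tL F G) / real (tL F (complete_graph (gverts G))) else 0)"

definition subgraph_polytope :: "('d::finite \<Rightarrow> graph) \<Rightarrow> nat \<Rightarrow> (real ^ 'd) set" where
  "subgraph_polytope F n =
     convex hull {(\<chi> i. tdens (F i) G) | G. is_graph G \<and> gverts G = n}"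

end

theory Submission
  imports Defs
begin

lemma weight_sum:
  fixes p :: real
  assumes "finite U" "S \<subseteq> U"
  shows "(\<Sum>E\<in>Pow U. if S \<subseteq> E then p ^ card E * (1-p) ^ card (U - E) else 0) = p ^ card S"
proof -
  let ?g = "\<lambda>e. if e \<in> S then 0 else 1 - p"
  have "(\<Prod>e\<in>U. p + ?g e) = (\<Sum>X\<in>Pow U. (\<Prod>x\<in>X. p) * (\<Prod>x\<in>U-X. ?g x))"
    by (rule prod_add[OF assms(1)])
  moreover have "(\<Prod>e\<in>U. p + ?g e) = p ^ card S"
  proof -
    have "(\<Prod>e\<in>U. p + ?g e) = (\<Prod>e\<in>U. if e \<in> S then p else 1)"
      by (rule prod.cong) auto
    also have "\<dots> = (\<Prod>e\<in>U \<inter> S. p)"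
      using assms(1) by (simp add: prod.If_cases)
    also have "\<dots> = p ^ card S" using assms by (simp add: Int_absorb1)
    finally show ?thesis .
  qed
  moreover have XX: "(\<Prod>x\<in>X. p) * (\<Prod>x\<in>U-X. ?g x) =
      (if S \<subseteq> X then p ^ card X * (1-p) ^ card (U - X) else 0)" if "X \<in> Pow U" for X
  proof (cases "S \<subseteq> X")
    case True
    have "(\<Prod>x\<in>U-X. ?g x) = (\<Prod>x\<in>U-X. 1 - p)"
      by (rule prod.cong) (use True in auto)
    then show ?thesis using True by simp
  next
    case False
    then obtain s where s: "s \<in> S" "s \<notin> X" by auto
    have "(\<Prod>x\<in>U-X. ?g x) = 0"
      using s assms by (intro prod_zero) auto
    then show ?thesis using False by simp
  qed
  ultimately have "(\<Sum>X\<in>Pow U. (\<Prod>x\<in>X. p) * (\<Prod>x\<in>U-X. ?g x)) = p ^ card S" by simp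
  moreover have "(\<Sum>X\<in>Pow U. (\<Prod>x\<in>X. p) * (\<Prod>x\<in>U-X. ?g x)) =
     (\<Sum>E\<in>Pow U. if S \<subseteq> E then p ^ card E * (1-p) ^ card (U - E) else 0)"
    by (rule sum.cong) (rule refl, rule XX)
  ultimately show ?thesis by simp
qed

lemma weight_total:
  fixes p :: real
  assumes "finite U"
  shows "(\<Sum>E\<in>Pow U. p ^ card E * (1-p) ^ card (U - E)) = 1"
  using weight_sum[OF assms, of "{}" p] by simp

lemma subgraphs_finite: "finite (subgraphs G)"
proof -
  have "subgraphs G \<subseteq> Pow {..<gverts G} \<times> Pow (Pow {..<gverts G})"
    unfolding subgraphs_def by auto
  moreover have "finite (Pow {..<gverts G} \<times> Pow (Pow {..<gverts G}))" by simp
  ultimately show ?thesis by (rule finite_subset)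
qed

lemma key:
  fixes F :: graph and n :: nat and p :: real
  assumes gF: "is_graph F" and kn: "gverts F \<le> n"
  defines "U \<equiv> {e. card e = 2 \<and> e \<subseteq> {..<n}}"
  shows "(\<Sum>E\<in>Pow U. (p ^ card E * (1-p) ^ card (U - E)) * tdens F (n, E)) = p ^ card (gedges F)"
proof -
  define A where "A = {H \<in> subgraphs (complete_graph n). iso_to F H}"
  have finU: "finite U" unfolding U_def
    by (rule finite_subset[of _ "Pow {..<n}"]) auto
  have finA: "finite A" unfolding A_def using subgraphs_finite by simp
  have cardH: "card (snd H) = card (gedges F)" if "H \<in> A" for H
  proof -
    from that obtain f where f: "bij_betw f {..<gverts F} (fst H)"
      "(\<lambda>e. f ` e) ` gedges F = snd H" unfolding A_def iso_to_def by auto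
    have "inj_on (image f) (Pow {..<gverts F})"
      using f(1) by (intro inj_on_image_Pow) (simp add: bij_betw_def)
    moreover have "gedges F \<subseteq> Pow {..<gverts F}" using gF unfolding is_graph_def by auto
    ultimately have "inj_on (image f) (gedges F)" by (rule inj_on_subset)
    then show ?thesis using f(2) card_image by metis
  qed
  have HU: "snd H \<subseteq> U" if "H \<in> A" for H
    using that unfolding A_def subgraphs_def complete_graph_def gedges_def gverts_def U_def by auto
  have cardA: "card A > 0"
  proof -
    have "({..<gverts F}, gedges F) \<in> A"
      unfolding A_def subgraphs_def iso_to_def complete_graph_def
      using gF kn unfolding is_graph_def gverts_def gedges_def
      by (force intro!: exI[of _ id])
    then show ?thesis using finA card_gt_0_iff by blast
  qed
  have tLE: "real (tL F (n, E)) = (\<Sum>H\<in>A. if snd H \<subseteq> E then 1 else 0)" if "E \<in> Pow U" for E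
  proof -
    have "{H \<in> subgraphs (n, E). iso_to F H} = {H \<in> A. snd H \<subseteq> E}"
      using that unfolding A_def subgraphs_def complete_graph_def gedges_def gverts_def U_def
      by auto
    then have "tL F (n, E) = card {H \<in> A. snd H \<subseteq> E}" unfolding tL_def by simp
    also have "\<dots> = (\<Sum>H\<in>A. if snd H \<subseteq> E then 1 else 0)"
    proof -
      have "{H \<in> A. snd H \<subseteq> E} = A \<inter> {H. snd H \<subseteq> E}" by blast
      then show ?thesis using finA by (simp add: sum.If_cases)
    qed
    finally show ?thesis by (simp add: of_nat_sum if_distrib cong: if_cong)
  qed
  have tLK: "tL F (complete_graph n) = card A" unfolding tL_def A_def by simp
  have td: "tdens F (n, E) = real (tL F (n, E)) / real (card A)" for E
    unfolding tdens_def using kn tLK by (simp add: gverts_def complete_graph_def)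
  have "(\<Sum>E\<in>Pow U. (p ^ card E * (1-p) ^ card (U - E)) * real (tL F (n, E)))
      = (\<Sum>E\<in>Pow U. \<Sum>H\<in>A. if snd H \<subseteq> E then p ^ card E * (1-p) ^ card (U - E) else 0)"
    by (rule sum.cong) (auto simp: tLE sum_distrib_left intro!: sum.cong)
  also have "\<dots> = (\<Sum>H\<in>A. \<Sum>E\<in>Pow U. if snd H \<subseteq> E then p ^ card E * (1-p) ^ card (U - E) else 0)"
    by (rule sum.swap)
  also have "\<dots> = (\<Sum>H\<in>A. p ^ card (gedges F))"
    by (rule sum.cong) (auto simp: weight_sum[OF finU HU] cardH)
  also have "\<dots> = real (card A) * p ^ card (gedges F)" by simp
  finally have "(\<Sum>E\<in>Pow U. (p ^ card E * (1-p) ^ card (U - E)) * real (tL F (n, E)))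
      = real (card A) * p ^ card (gedges F)" .
  then have "(\<Sum>E\<in>Pow U. (p ^ card E * (1-p) ^ card (U - E)) * real (tL F (n, E))) / real (card A)
      = p ^ card (gedges F)" using cardA by simp
  then show ?thesis by (simp add: td sum_divide_distrib mult.assoc)
qed

theorem proposition3p1:
  fixes F :: "'d::finite \<Rightarrow> graph" and n :: nat and p :: real
  assumes "\<And>i. is_graph (F i)"
    and "\<And>i. gverts (F i) \<le> n"
    and "0 \<le> p" and "p \<le> 1"
  shows "(\<chi> i. p ^ card (gedges (F i))) \<in> subgraph_polytope F n"
proof -
  define U where "U = {e. card e = 2 \<and> e \<subseteq> {..<n::nat}}"
  define w where "w E = p ^ card E * (1-p) ^ card (U - E)" for E :: "nat set set"
  define y where "y E = (\<chi> i. tdens (F i) (n, E))" for E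
  have finU: "finite U" unfolding U_def
    by (rule finite_subset[of _ "Pow {..<n}"]) auto
  have eq: "(\<chi> i. p ^ card (gedges (F i))) = (\<Sum>E\<in>Pow U. w E *\<^sub>R y E)"
    unfolding vec_eq_iff y_def w_def U_def
    using key[OF assms(1,2)] by simp
  have "(\<Sum>E\<in>Pow U. w E *\<^sub>R y E) \<in> subgraph_polytope F n"
    unfolding subgraph_polytope_def
  proof (rule convex_sum)
    show "finite (Pow U)" using finU by simp
    show "convex (convex hull {(\<chi> i. tdens (F i) G) | G. is_graph G \<and> gverts G = n})"
      by (rule convex_convex_hull)
    show "(\<Sum>i\<in>Pow U. w i) = 1" unfolding w_def by (rule weight_total[OF finU])
    show "\<And>i. i \<in> Pow U \<Longrightarrow> 0 \<le> w i" unfolding w_def using assms(3,4) by simp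
    fix E assume "E \<in> Pow U"
    then have "is_graph (n, E)" unfolding is_graph_def U_def gedges_def gverts_def by auto
    then have "y E \<in> {(\<chi> i. tdens (F i) G) | G. is_graph G \<and> gverts G = n}"
      unfolding y_def by (auto simp: gverts_def)
    then show "y E \<in> convex hull {(\<chi> i. tdens (F i) G) | G. is_graph G \<and> gverts G = n}"
      by (rule hull_inc)
  qed
  then show ?thesis using eq by simp
qed

end
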